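(* Let $r\ge1$ and $n\ge1$ be integers and let $\mathcal P(n,r,-1)$ be the set of lattice paths with steps $(1,1)$ (up) and $(1,-r)$ (down) from $(0,0)$ to $((r+1)n-1,-1)$ (so with $rn-1$ up steps and $n$ down steps). Then (whenever the denominators are nonzero): (1) For each $k=1,2,\dots,rn-1$, the number of paths in $\mathcal P(n,r,-1)$ that start with an up step and have exactly $k$ up steps starting on or above the $x$-axis is $\frac{1}{rn-1}\binom{(r+1)n-2}{n}$. (2) For each $k=1,2,\dots,n$, the number of paths in $\mathcal P(n,r,-1)$ that start with a down step and have exactly $k$ down steps starting on or above the $x$-axis is $\frac1n\binom{(r+1)n-2}{n-1}$. (3) For each $k=1,2,\dots,(r+1)n-1$, the number of paths in $\mathcal P(n,r,-1)$ with exactly $k$ vertices on or above the $x$-axis is $\frac{1}{(r+1)n-1}\binom{(r+1)n-1}{n}$.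
   Context: A step starts on or above the $x$-axis if its initial vertex has $y$-coordinate $\ge0$; a vertex is on or above the $x$-axis if its $y$-coordinate is $\ge0$ (the final vertex, at height $-1$, is never counted). *)

theory Defs
  imports Complex_Main
begin

text \<open>A lattice path is encoded as a list of steps: True = up step (1,1),
  False = down step (1,-r).  Vertex i (0 \<le> i \<le> length p) is the point reached after
  the first i steps; step i (0 \<le> i < length p) starts at vertex i.\<close>

definition height :: "nat \<Rightarrow> bool list \<Rightarrow> nat \<Rightarrow> int" where
  "height r p i = (\<Sum>j<i. if p ! j then 1 else - int r)"

definition paths :: "nat \<Rightarrow> nat \<Rightarrow> bool list set" where
  "paths n r = {p. length (filter (\<lambda>s. s) p) = r * n - 1 \<and> length (filter Not p) = n}"

definition ups_above :: "nat \<Rightarrow> bool list \<Rightarrow> nat" where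
  "ups_above r p = card {i. i < length p \<and> p ! i \<and> height r p i \<ge> 0}"

definition downs_above :: "nat \<Rightarrow> bool list \<Rightarrow> nat" where
  "downs_above r p = card {i. i < length p \<and> \<not> p ! i \<and> height r p i \<ge> 0}"

definition verts_above :: "nat \<Rightarrow> bool list \<Rightarrow> nat" where
  "verts_above r p = card {i. i < length p \<and> height r p i \<ge> 0}"

end

theory Submission
  imports Defs
begin

definition stp :: "nat \<Rightarrow> bool \<Rightarrow> int" where
  "stp r b = (if b then 1 else - int r)"

definition HH :: "nat \<Rightarrow> bool list \<Rightarrow> nat \<Rightarrow> int" where
  "HH r p m = (\<Sum>s<m. stp r (p ! (s mod length p)))"

definition key :: "nat \<Rightarrow> bool list \<Rightarrow> nat \<Rightarrow> int" where
  "key r p m = int (length p) * HH r p m + int m"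

definition cntP :: "(bool \<Rightarrow> bool) \<Rightarrow> nat \<Rightarrow> bool list \<Rightarrow> nat" where
  "cntP P r q = card {i. i < length q \<and> P (q ! i) \<and> height r q i \<ge> 0}"

lemma sum_split: "(\<Sum>s<m+(i::nat). f s) = (\<Sum>s<m. f s) + (\<Sum>s<i. (f (m+s) :: int))"
  by (induct i) (auto simp: add.assoc)

lemma height_stp: "height r p i = (\<Sum>j<i. stp r (p!j))"
  unfolding height_def stp_def by simp

lemma HH_le: "m \<le> length p \<Longrightarrow> HH r p m = height r p m"
  unfolding HH_def height_stp by (intro sum.cong) auto

lemma HH_periodic:
  assumes "length p > 0"
  shows "HH r p (length p + m) = HH r p (length p) + HH r p m"
  unfolding HH_def sum_split by simp

lemma height_rot:
  assumes "j < length p" "i \<le> length p"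
  shows "height r (rotate j p) i = HH r p (j+i) - HH r p j"
proof -
  have "height r (rotate j p) i = (\<Sum>s<i. stp r (p ! ((j+s) mod length p)))"
    unfolding height_stp using assms by (intro sum.cong) (auto simp: nth_rotate)
  moreover have "HH r p (j+i) = HH r p j + (\<Sum>s<i. stp r (p ! ((j+s) mod length p)))"
    unfolding HH_def sum_split by simp
  ultimately show ?thesis by simp
qed

lemma key_periodic:
  assumes "length p > 0" "HH r p (length p) = -1"
  shows "key r p (length p + m) = key r p m"
  unfolding key_def HH_periodic[OF assms(1)] assms(2) by (simp add: algebra_simps)

lemma key_mod:
  assumes "length p > 0" "HH r p (length p) = -1"
  shows "key r p m = key r p (m mod length p)"
proof -
  have "\<And>q t. key r p (length p * q + t) = key r p t"
  proof -
    fix q t show "key r p (length p * q + t) = key r p t"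
    proof (induct q)
      case (Suc q)
      have "length p * Suc q + t = length p + (length p * q + t)" by simp
      then show ?case using key_periodic[OF assms, of "length p * q + t"] Suc by (simp only:)
    qed simp
  qed
  then show ?thesis by (metis div_mult_mod_eq mult.commute)
qed

lemma int_aux1:
  fixes L d i :: int
  assumes "L > 0" "0 \<le> i" "i < L"
  shows "(0 \<le> L*d + i) \<longleftrightarrow> (0 \<le> d)"
proof
  assume "0 \<le> L*d + i"
  show "0 \<le> d"
  proof (rule ccontr)
    assume "\<not> 0 \<le> d" then have "d \<le> -1" by simp
    then have "L*d \<le> L*(-1)" using assms by (intro mult_left_mono) auto
    then show False using assms \<open>0 \<le> L*d + i\<close> by simp
  qed
next
  assume "0 \<le> d" then show "0 \<le> L*d + i" using assms by simp
qed

lemma int_aux2: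
  fixes L d i :: int
  assumes "L > 0" "\<bar>i\<bar> < L" "L*d = i"
  shows "d = 0"
proof (rule ccontr)
  assume "d \<noteq> 0" then have "\<bar>d\<bar> \<ge> 1" by simp
  then have "L*\<bar>d\<bar> \<ge> L*1" using assms by (intro mult_left_mono) auto
  moreover have "\<bar>L*d\<bar> = L*\<bar>d\<bar>" using assms(1) by (simp add: abs_mult)
  ultimately show False using assms by simp
qed

lemma cnt_rot:
  assumes L: "length p > 0" and H: "HH r p (length p) = -1" and j: "j < length p"
  shows "cntP P r (rotate j p) = card {t. t < length p \<and> P (p!t) \<and> key r p t \<ge> key r p j}"
proof -
  let ?L = "length p"
  let ?A = "{i. i < ?L \<and> P (p ! ((j+i) mod ?L)) \<and> HH r p (j+i) \<ge> HH r p j}"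
  let ?B = "{t. t < ?L \<and> P (p!t) \<and> key r p t \<ge> key r p j}"
  let ?f = "\<lambda>i. (j+i) mod ?L"
  have 1: "cntP P r (rotate j p) = card ?A"
    unfolding cntP_def using j by (intro arg_cong[where f=card]) (auto simp: nth_rotate height_rot)
  have cond: "HH r p (j+i) \<ge> HH r p j \<longleftrightarrow> key r p ((j+i) mod ?L) \<ge> key r p j" if "i < ?L" for i
  proof -
    have "key r p ((j+i) mod ?L) = key r p (j+i)" using key_mod[OF L H] by simp
    then have "key r p ((j+i) mod ?L) - key r p j = int ?L * (HH r p (j+i) - HH r p j) + int i"
      unfolding key_def by (simp add: algebra_simps)
    moreover have "(0 \<le> int ?L * (HH r p (j+i) - HH r p j) + int i) \<longleftrightarrow> 0 \<le> HH r p (j+i) - HH r p j"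
      using int_aux1[of "int ?L" "int i"] L that by simp
    ultimately show ?thesis by linarith
  qed
  have inj: "inj_on ?f ?A"
  proof
    fix x y assume "x \<in> ?A" "y \<in> ?A" "?f x = ?f y"
    then have "x < ?L" "y < ?L" by auto
    have "(?f x + (?L - j)) mod ?L = (?f y + (?L - j)) mod ?L" using \<open>?f x = ?f y\<close> by simp
    then have "(j + x + (?L - j)) mod ?L = (j + y + (?L - j)) mod ?L" by (simp add: mod_add_left_eq)
    moreover have "j + x + (?L - j) = ?L + x" "j + y + (?L - j) = ?L + y" using j by auto
    ultimately show "x = y" using \<open>x < ?L\<close> \<open>y < ?L\<close> by simp
  qed
  have img: "?f ` ?A = ?B"
  proof
    show "?f ` ?A \<subseteq> ?B"
    proof
      fix t assume "t \<in> ?f ` ?A"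
      then obtain i where i: "i \<in> ?A" "t = ?f i" by blast
      then have "i < ?L" by simp
      then show "t \<in> ?B" using cond[of i] i L by simp
    qed
  next
    show "?B \<subseteq> ?f ` ?A"
    proof
      fix t assume t: "t \<in> ?B"
      let ?i = "(t + (?L - j)) mod ?L"
      have "?f ?i = (j + (t + (?L - j))) mod ?L" by (simp add: mod_add_right_eq)
      also have "j + (t + (?L - j)) = ?L + t" using j by simp
      finally have fi: "?f ?i = t" using t by simp
      have "?i < ?L" using L by simp
      have a1: "P (p ! (?f ?i))" using fi t by simp
      have "key r p (?f ?i) \<ge> key r p j" using fi t by simp
      then have a2: "HH r p (j + ?i) \<ge> HH r p j" using cond[OF \<open>?i < ?L\<close>] by blast
      have "?i \<in> ?A" by (intro CollectI conjI \<open>?i < ?L\<close> a1 a2)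
      then show "t \<in> ?f ` ?A" using fi[symmetric] by (rule rev_image_eqI)
    qed
  qed
  have "card ?B = card ?A" using card_image[OF inj] img by (simp only:)
  then show ?thesis using 1 by (simp only:)
qed

lemma rank_unique:
  fixes g :: "nat \<Rightarrow> int"
  assumes fin: "finite J" and inj: "inj_on g J" and k: "k \<in> {1..card J}"
  shows "card {j\<in>J. card {t\<in>J. g t \<ge> g j} = k} = 1"
proof -
  let ?c = "\<lambda>j. card {t\<in>J. g t \<ge> g j}"
  have cinj: "inj_on ?c J"
  proof
    fix x y assume x: "x \<in> J" and y: "y \<in> J" and e: "?c x = ?c y"
    show "x = y"
    proof (rule ccontr)
      assume "x \<noteq> y"
      then have "g x \<noteq> g y" using inj x y by (meson inj_onD)
      then consider "g x < g y" | "g y < g x" by linarith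
      then show False
      proof cases
        case 1
        then have "{t\<in>J. g t \<ge> g y} \<subseteq> {t\<in>J. g t \<ge> g x}" by auto
        moreover have "x \<in> {t\<in>J. g t \<ge> g x} - {t\<in>J. g t \<ge> g y}" using x \<open>g x < g y\<close> by auto
        ultimately have "{t\<in>J. g t \<ge> g y} \<subset> {t\<in>J. g t \<ge> g x}" by blast
        then have "?c y < ?c x" using fin by (intro psubset_card_mono) auto
        then show False using e by simp
      next
        case 2
        then have "{t\<in>J. g t \<ge> g x} \<subseteq> {t\<in>J. g t \<ge> g y}" by auto
        moreover have "y \<in> {t\<in>J. g t \<ge> g y} - {t\<in>J. g t \<ge> g x}" using y \<open>g y < g x\<close> by auto
        ultimately have "{t\<in>J. g t \<ge> g x} \<subset> {t\<in>J. g t \<ge> g y}" by blast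
        then have "?c x < ?c y" using fin by (intro psubset_card_mono) auto
        then show False using e by simp
      qed
    qed
  qed
  have sub: "?c ` J \<subseteq> {1..card J}"
  proof
    fix z assume "z \<in> ?c ` J"
    then obtain j where j: "j \<in> J" "z = ?c j" by auto
    have "?c j \<le> card J" using fin by (intro card_mono) auto
    moreover have "?c j \<ge> 1"
    proof -
      have "j \<in> {t\<in>J. g t \<ge> g j}" using j by auto
      then have "{t\<in>J. g t \<ge> g j} \<noteq> {}" by blast
      then show ?thesis using fin by (simp add: Suc_le_eq card_gt_0_iff)
    qed
    ultimately show "z \<in> {1..card J}" using j by simp
  qed
  have "card (?c ` J) = card {1..card J}" using card_image[OF cinj] by simp
  then have eq: "?c ` J = {1..card J}" using sub by (intro card_subset_eq) auto
  then obtain j0 where j0: "j0 \<in> J" "?c j0 = k" using k by (metis (no_types, lifting) imageE)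
  have "{j\<in>J. ?c j = k} = {j0}" using j0 cinj by (auto simp: inj_on_def)
  then show ?thesis by simp
qed

lemma key_inj:
  assumes L: "length p > 0"
  shows "inj_on (key r p) {..<length p}"
proof
  fix s t assume s: "s \<in> {..<length p}" and t: "t \<in> {..<length p}" and e: "key r p s = key r p t"
  have "int (length p) * (HH r p s - HH r p t) = int t - int s"
    using e unfolding key_def by (simp add: algebra_simps)
  moreover have "\<bar>int t - int s\<bar> < int (length p)" using s t by auto
  ultimately have "HH r p s - HH r p t = 0" using L int_aux2[of "int (length p)" "int t - int s" "HH r p s - HH r p t"] by simp
  then show "s = t" using e unfolding key_def by simp
qed

lemma rank_rot:
  assumes L: "length p > 0" and H: "HH r p (length p) = -1"
    and k: "k \<in> {1..card {t. t < length p \<and> P (p!t)}}"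
  shows "card {j. j < length p \<and> P (p!j) \<and> cntP P r (rotate j p) = k} = 1"
proof -
  let ?J = "{t. t < length p \<and> P (p!t)}"
  have inj: "inj_on (key r p) ?J" using key_inj[OF L] by (rule inj_on_subset) auto
  have "{j. j < length p \<and> P (p!j) \<and> cntP P r (rotate j p) = k}
      = {j\<in>?J. card {t\<in>?J. key r p t \<ge> key r p j} = k}"
  proof (intro Collect_cong iffI)
    fix j assume "j < length p \<and> P (p!j) \<and> cntP P r (rotate j p) = k"
    then show "j\<in>?J \<and> card {t\<in>?J. key r p t \<ge> key r p j} = k"
      using cnt_rot[OF L H, of j P] by simp
  next
    fix j assume "j\<in>?J \<and> card {t\<in>?J. key r p t \<ge> key r p j} = k"
    then show "j < length p \<and> P (p!j) \<and> cntP P r (rotate j p) = k"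
      using cnt_rot[OF L H, of j P] by simp
  qed
  also have "card \<dots> = 1" by (rule rank_unique[OF _ inj k]) simp
  finally show ?thesis .
qed

lemma count_main:
  fixes Pt :: "bool list set"
  assumes fin: "finite Pt" and Lpos: "L > 0" and len: "\<forall>p\<in>Pt. length p = L"
    and HHm: "\<forall>p\<in>Pt. HH r p L = -1" and rot: "\<forall>p\<in>Pt. \<forall>j. rotate j p \<in> Pt"
    and cardJ: "\<forall>p\<in>Pt. card {t. t < L \<and> P (p!t)} = m" and k: "k \<in> {1..m}"
  shows "card {q\<in>Pt. P (hd q) \<and> cntP P r q = k} * L = card Pt"
proof -
  let ?B = "\<lambda>p. {j. j < L \<and> P (p!j) \<and> cntP P r (rotate j p) = k}"
  let ?S = "Sigma Pt ?B"
  let ?A = "{q\<in>Pt. P (hd q) \<and> cntP P r q = k}"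
  have "card ?S = (\<Sum>p\<in>Pt. card (?B p))" using fin by (intro card_SigmaI) auto
  also have "\<dots> = (\<Sum>p\<in>Pt. 1)"
  proof (rule sum.cong)
    fix p assume p: "p \<in> Pt"
    show "card (?B p) = 1" using rank_rot[of p r k P] p len HHm cardJ k Lpos by simp
  qed simp
  finally have c1: "card ?S = card Pt" by simp
  have hdrot: "hd (rotate j p) = p ! j" if "p \<in> Pt" "j < L" for p j
  proof -
    have "rotate j p \<noteq> []" using that len Lpos by auto
    then have "hd (rotate j p) = rotate j p ! 0" by (simp add: hd_conv_nth)
    also have "\<dots> = p ! j" using that len Lpos by (simp add: nth_rotate)
    finally show ?thesis .
  qed
  have rr: "rotate (L - j) (rotate j p) = p" "rotate j (rotate (L - j) p) = p"
    if "p \<in> Pt" "j < L" for p j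
    using that len by (auto simp: rotate_rotate intro!: rotate_id)
  have "bij_betw (\<lambda>(p,j). (rotate j p, j)) ?S (?A \<times> {..<L})"
  proof (rule bij_betw_byWitness[where f'="\<lambda>(q,j). (rotate (L - j) q, j)"])
    show "\<forall>a\<in>?S. (\<lambda>(q,j). (rotate (L - j) q, j)) ((\<lambda>(p,j). (rotate j p, j)) a) = a"
      using rr by auto
    show "\<forall>a\<in>?A \<times> {..<L}. (\<lambda>(p,j). (rotate j p, j)) ((\<lambda>(q,j). (rotate (L - j) q, j)) a) = a"
      using rr by auto
    show "(\<lambda>(p,j). (rotate j p, j)) ` ?S \<subseteq> ?A \<times> {..<L}"
      using rot hdrot by auto
    show "(\<lambda>(q,j). (rotate (L - j) q, j)) ` (?A \<times> {..<L}) \<subseteq> ?S"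
    proof
      fix x assume "x \<in> (\<lambda>(q,j). (rotate (L - j) q, j)) ` (?A \<times> {..<L})"
      then obtain q j where q: "q \<in> ?A" and j: "j < L" and x: "x = (rotate (L - j) q, j)" by auto
      have qP: "q \<in> Pt" using q by simp
      have "rotate (L - j) q \<in> Pt" using rot qP by simp
      moreover have "rotate (L - j) q ! j = hd q"
      proof -
        have "rotate (L - j) q ! j = q ! ((L - j + j) mod L)" using len qP j by (simp add: nth_rotate)
        also have "\<dots> = q ! 0" using j by simp
        also have "\<dots> = hd q" using len qP Lpos by (cases q) auto
        finally show ?thesis .
      qed
      moreover have "rotate j (rotate (L - j) q) = q" using rr(2)[OF qP j] .
      ultimately show "x \<in> ?S" using q j x by simp
    qed
  qed
  then have "card ?S = card (?A \<times> {..<L})" by (rule bij_betw_same_card)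
  then show ?thesis using c1 by (simp add: card_cartesian_product)
qed

lemma len_filter_rot1: "length (filter f (rotate1 xs)) = length (filter f xs)"
  by (cases xs) auto

lemma len_filter_rot: "length (filter f (rotate j xs)) = length (filter f xs)"
  by (induct j) (simp_all add: rotate_Suc len_filter_rot1)

lemma sum_stp_list:
  "(\<Sum>j<length p. stp r (p!j)) = int (length (filter (\<lambda>s. s) p)) - int r * int (length (filter Not p))"
proof (induct p)
  case (Cons a p)
  have "(\<Sum>j<length (a#p). stp r ((a#p)!j)) = stp r a + (\<Sum>j<length p. stp r (p!j))"
    by (simp only: length_Cons sum.lessThan_Suc_shift nth_Cons_0 nth_Cons_Suc)
  then show ?case using Cons by (simp add: stp_def algebra_simps)
qed simp

lemma path_len:
  assumes "p \<in> paths n r" "r \<ge> 1" "n \<ge> 1"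
  shows "length p = (r+1)*n - 1"
proof -
  have "length (filter (\<lambda>s. s) p) + length (filter Not p) = length p"
    using sum_length_filter_compl[of "\<lambda>s. s" p] by simp
  moreover have "r*n \<ge> 1" using assms by simp
  ultimately show ?thesis using assms(1) unfolding paths_def by (simp add: algebra_simps)
qed

lemma path_HH:
  assumes "p \<in> paths n r" "r \<ge> 1" "n \<ge> 1"
  shows "HH r p (length p) = -1"
proof -
  have "HH r p (length p) = height r p (length p)" by (simp add: HH_le)
  also have "\<dots> = int (length (filter (\<lambda>s. s) p)) - int r * int (length (filter Not p))"
    by (simp add: height_stp sum_stp_list)
  also have "\<dots> = int (r*n - 1) - int r * int n" using assms(1) unfolding paths_def by simp
  also have "\<dots> = -1"
  proof -
    have "r*n \<ge> 1" using assms by simp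
    then show ?thesis by (simp add: of_nat_diff)
  qed
  finally show ?thesis .
qed

lemma paths_rot: "p \<in> paths n r \<Longrightarrow> rotate j p \<in> paths n r"
  unfolding paths_def by (simp add: len_filter_rot)

lemma card_lists:
  "card {p. length (filter (\<lambda>s. s) p) = a \<and> length (filter Not p) = b} = (a+b) choose b"
proof -
  let ?X = "{p. length (filter (\<lambda>s. s) p) = a \<and> length (filter Not p) = b}"
  let ?Y = "{A. A \<subseteq> {..<a+b} \<and> card A = b}"
  let ?f = "\<lambda>p. {i. i < length p \<and> \<not> p!i}"
  let ?g = "\<lambda>A. map (\<lambda>i. i \<notin> A) [0..<a+b]"
  have lenX: "length p = a + b" if "p \<in> ?X" for p
    using that sum_length_filter_compl[of "\<lambda>s. s" p] by simp
  have "bij_betw ?f ?X ?Y"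
  proof (rule bij_betw_byWitness[where f'="?g"])
    show "\<forall>p\<in>?X. ?g (?f p) = p"
    proof
      fix p assume p: "p \<in> ?X"
      show "?g (?f p) = p" using lenX[OF p] by (intro nth_equalityI) auto
    qed
    show "\<forall>A\<in>?Y. ?f (?g A) = A" by auto
    show "?f ` ?X \<subseteq> ?Y"
    proof
      fix A assume "A \<in> ?f ` ?X"
      then obtain p where p: "p \<in> ?X" "A = ?f p" by auto
      have "card A = length (filter Not p)" using p by (simp add: length_filter_conv_card)
      then show "A \<in> ?Y" using p lenX[OF p(1)] by auto
    qed
    show "?g ` ?Y \<subseteq> ?X"
    proof
      fix q assume "q \<in> ?g ` ?Y"
      then obtain A where A: "A \<in> ?Y" "q = ?g A" by auto
      have lq: "length q = a + b" using A by simp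
      have "length (filter Not q) = card {i. i < length q \<and> \<not> q!i}"
        by (rule length_filter_conv_card)
      also have "{i. i < length q \<and> \<not> q!i} = A" using A by auto
      finally have fb: "length (filter Not q) = b" using A by simp
      moreover have "length (filter (\<lambda>s. s) q) = a"
        using sum_length_filter_compl[of "\<lambda>s. s" q] fb lq by simp
      ultimately show "q \<in> ?X" by simp
    qed
  qed
  then have "card ?X = card ?Y" by (rule bij_betw_same_card)
  also have "\<dots> = (a+b) choose b" using n_subsets[of "{..<a+b}" b] by simp
  finally show ?thesis .
qed

lemma finite_paths:
  assumes "r \<ge> 1" "n \<ge> 1"
  shows "finite (paths n r)"
proof -
  have "paths n r \<subseteq> {xs. set xs \<subseteq> UNIV \<and> length xs = (r+1)*n - 1}"
    using path_len[OF _ assms] by auto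
  then show ?thesis using finite_lists_length_eq[of UNIV] by (rule finite_subset) simp
qed

lemma main_counts:
  assumes r: "r \<ge> 1" and n: "n \<ge> 1"
    and J: "\<forall>p\<in>paths n r. card {t. t < (r+1)*n - 1 \<and> P (p!t)} = m" and k: "k \<in> {1..m}"
  shows "card {q\<in>paths n r. P (hd q) \<and> cntP P r q = k} * ((r+1)*n - 1) = ((r+1)*n - 1) choose n"
proof -
  let ?L = "(r+1)*n - 1"
  have rn: "r*n \<ge> 1" using r n by simp
  have Lpos: "?L > 0"
  proof -
    have "(r+1)*n = r*n + n" by (simp add: algebra_simps)
    then show ?thesis using rn n by linarith
  qed
  have "card (paths n r) = (r*n - 1 + n) choose n" unfolding paths_def by (rule card_lists)
  also have "r*n - 1 + n = ?L" using rn by (simp add: algebra_simps)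
  finally have cP: "card (paths n r) = ?L choose n" .
  have "card {q\<in>paths n r. P (hd q) \<and> cntP P r q = k} * ?L = card (paths n r)"
  proof (rule count_main[OF finite_paths[OF r n] Lpos _ _ _ J k])
    show "\<forall>p\<in>paths n r. length p = ?L" using path_len[OF _ r n] by blast
    show "\<forall>p\<in>paths n r. HH r p ?L = -1" using path_HH[OF _ r n] path_len[OF _ r n] by metis
    show "\<forall>p\<in>paths n r. \<forall>j. rotate j p \<in> paths n r" using paths_rot by blast
  qed
  then show ?thesis using cP by simp
qed

lemma cardJ_gen:
  assumes "p \<in> paths n r" "r \<ge> 1" "n \<ge> 1"
  shows "card {t. t < (r+1)*n - 1 \<and> P (p!t)} = length (filter P p)"
  using path_len[OF assms] by (simp add: length_filter_conv_card)

lemma arith_gen: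
  fixes c L B m D :: nat
  assumes "c*L = B" "m*B = L*D" "L > 0"
  shows "c*m = D"
proof -
  have "L*(c*m) = m*(c*L)" by (simp add: ac_simps)
  also have "\<dots> = L*D" using assms by simp
  finally show ?thesis using assms(3) by simp
qed

lemma real_div_gen:
  fixes c m D :: nat
  assumes "c*m = D" "m > 0"
  shows "real c = real D / real m"
proof -
  have "real D = real c * real m" using assms(1) by (metis of_nat_mult)
  then show ?thesis using assms(2) by simp
qed

theorem theorem14:
  fixes n r :: nat
  assumes "r \<ge> 1" and "n \<ge> 1"
  shows "(\<forall>k\<in>{1..r*n-1}.
            real (card {p \<in> paths n r. p \<noteq> [] \<and> hd p \<and> ups_above r p = k})
              = real (((r+1)*n-2) choose n) / real (r*n-1))
       \<and> (\<forall>k\<in>{1..n}.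
            real (card {p \<in> paths n r. p \<noteq> [] \<and> \<not> hd p \<and> downs_above r p = k})
              = real (((r+1)*n-2) choose (n-1)) / real n)
       \<and> (\<forall>k\<in>{1..(r+1)*n-1}.
            real (card {p \<in> paths n r. verts_above r p = k})
              = real (((r+1)*n-1) choose n) / real ((r+1)*n-1))"
proof -
  let ?L = "(r+1)*n - 1"
  have rn: "r*n \<ge> 1" using assms by simp
  have Lpos: "?L > 0"
  proof -
    have "(r+1)*n = r*n + n" by (simp add: algebra_simps)
    then show ?thesis using rn assms by linarith
  qed
  have L2: "(r+1)*n - 2 = ?L - 1" by simp
  have U: "r*n - 1 = ?L - n" by (simp add: algebra_simps)
  have ne: "p \<noteq> []" if "p \<in> paths n r" for p
    using path_len[OF that assms] Lpos by auto
  have part1: "real (card {p \<in> paths n r. p \<noteq> [] \<and> hd p \<and> ups_above r p = k})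
              = real (((r+1)*n-2) choose n) / real (r*n-1)" if k: "k \<in> {1..r*n-1}" for k
  proof -
    let ?A = "{q\<in>paths n r. (\<lambda>s. s) (hd q) \<and> cntP (\<lambda>s. s) r q = k}"
    have J1: "\<forall>p\<in>paths n r. card {t. t < ?L \<and> (\<lambda>s. s) (p!t)} = r*n-1"
      using cardJ_gen[OF _ assms, of _ "\<lambda>s. s"] by (simp add: paths_def)
    have "card ?A * ?L = ?L choose n" by (rule main_counts[OF assms J1 k])
    then have c: "card ?A * (?L - n) = (?L - 1) choose n"
      using binomial_absorb_comp[of ?L n] Lpos by (rule arith_gen)
    have eq: "{p \<in> paths n r. p \<noteq> [] \<and> hd p \<and> ups_above r p = k} = ?A"
      using ne unfolding ups_above_def cntP_def by auto
    have "?L - n > 0" using k U by (simp del: One_nat_def) linarith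
    then show ?thesis unfolding eq L2 U using c by (intro real_div_gen)
  qed
  have part2: "real (card {p \<in> paths n r. p \<noteq> [] \<and> \<not> hd p \<and> downs_above r p = k})
              = real (((r+1)*n-2) choose (n-1)) / real n" if k: "k \<in> {1..n}" for k
  proof -
    let ?A = "{q\<in>paths n r. Not (hd q) \<and> cntP Not r q = k}"
    have J1: "\<forall>p\<in>paths n r. card {t. t < ?L \<and> Not (p!t)} = n"
      using cardJ_gen[OF _ assms, of _ Not] by (simp add: paths_def)
    have "card ?A * ?L = ?L choose n" by (rule main_counts[OF assms J1 k])
    moreover have "n * (?L choose n) = ?L * ((?L - 1) choose (n - 1))"
      using times_binomial_minus1_eq[of n ?L] assms by simp
    ultimately have c: "card ?A * n = (?L - 1) choose (n - 1)" using Lpos by (rule arith_gen)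
    have eq: "{p \<in> paths n r. p \<noteq> [] \<and> \<not> hd p \<and> downs_above r p = k} = ?A"
      using ne unfolding downs_above_def cntP_def by auto
    show ?thesis unfolding eq L2 using c assms by (intro real_div_gen) auto
  qed
  have part3: "real (card {p \<in> paths n r. verts_above r p = k})
              = real (((r+1)*n-1) choose n) / real ((r+1)*n-1)" if k: "k \<in> {1..(r+1)*n-1}" for k
  proof -
    let ?A = "{q\<in>paths n r. (\<lambda>_. True) (hd q) \<and> cntP (\<lambda>_. True) r q = k}"
    have J1: "\<forall>p\<in>paths n r. card {t. t < ?L \<and> (\<lambda>_. True) (p!t)} = ?L"
      using cardJ_gen[OF _ assms, of _ "\<lambda>_. True"] path_len[OF _ assms] by simp
    have "card ?A * ?L = ?L choose n" by (rule main_counts[OF assms J1 k])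
    moreover have eq: "{p \<in> paths n r. verts_above r p = k} = ?A"
      unfolding verts_above_def cntP_def by auto
    ultimately show ?thesis using Lpos by (intro real_div_gen) auto
  qed
  show ?thesis using part1 part2 part3 by blast
qed

end
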